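(* Let $\mathcal{D}$ and $\mathcal{F}$ be semistable vector bundles on the Fargues–Fontaine curve $X$ with $\mathrm{HNvec}(\mathcal{D})=(\vec\beta)$, $\mathrm{HNvec}(\mathcal{F})=(\vec\gamma)$ and $\vec\beta\preceq\vec\gamma$. Let $\mathcal{E}$ be a vector bundle on $X$ with $\mathrm{HN}(\mathcal{E})\le\mathrm{HN}(\mathcal{D}\oplus\mathcal{F})$ (same endpoints), and suppose the maximal slope of $\mathcal{E}$ is strictly less than the slope of $\mathcal{F}$. Let $\mathcal{K}$ be a vector bundle on $X$ with the same rank and degree as $\mathcal{D}$ such that (i) the maximal slope of $\mathcal{K}$ is at most the maximal slope of $\mathcal{E}$, and (ii) $\mathcal{K}$ is not semistable. Then \[\deg(\mathcal{K}^\vee\otimes\mathcal{E})^{\ge 0}<\deg(\mathcal{K}^\vee\otimes\mathcal{K})^{\ge 0}+\deg(\mathcal{E}^\vee\otimes\mathcal{F})^{\ge 0}.\]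
   Context: $X=X_{E,F}$ is the Fargues–Fontaine curve. For a bundle $\mathcal{V}\simeq\bigoplus_{i=1}^s\mathcal{O}(d_i/h_i)^{m_i}$ with $d_1/h_1>\cdots>d_s/h_s$ in lowest terms ($h_i>0$), the HN vectors are $\mathrm{HNvec}(\mathcal{V})=(v_i)$ with $v_i=(m_ih_i,m_id_i)$; for a semistable bundle this is the single vector $(\mathrm{rank},\deg)$. For vectors with nonzero $x$-coordinate, $v\preceq w$ means slope of $v\le$ slope of $w$. $\mathrm{HN}$ is the Harder–Narasimhan polygon starting at the origin, and $P\le P'$ means $P$ lies on or below $P'$ with the same endpoints. $\mathcal{U}^{\ge 0}$ is the step of the HN filtration of $\mathcal{U}$ consisting of HN pieces of slope $\ge 0$. *)

theory Defs
  imports Complex_Main "HOL-Library.Multiset"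
begin

text \<open>Vector bundles on the Fargues-Fontaine curve, up to isomorphism, via the
classification theorem: a vbundle is a finite direct sum of stable bundles O(q),
q a rational slope. O(q) with q = d/h in lowest terms (h > 0) has rank h and
degree d. A vbundle is represented by the multiset of slopes of its stable summands.\<close>

type_synonym vbundle = "rat multiset"

definition stab_rank :: "rat \<Rightarrow> nat" where
  "stab_rank q = nat (snd (quotient_of q))"

definition stab_deg :: "rat \<Rightarrow> int" where
  "stab_deg q = fst (quotient_of q)"

definition rk :: "vbundle \<Rightarrow> nat" where
  "rk V = (\<Sum>q\<in>#V. stab_rank q)"

definition dg :: "vbundle \<Rightarrow> int" where
  "dg V = (\<Sum>q\<in>#V. stab_deg q)"

definition slope :: "vbundle \<Rightarrow> rat" where
  "slope V = of_int (dg V) / of_nat (rk V)"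

definition max_slope :: "vbundle \<Rightarrow> rat" where
  "max_slope V = Max (set_mset V)"

definition semistable :: "vbundle \<Rightarrow> bool" where
  "semistable V \<longleftrightarrow> (\<forall>x\<in>#V. \<forall>y\<in>#V. x = y)"

text \<open>direct sum is multiset sum (+); dual: O(q)^dual = O(-q)\<close>
definition dual :: "vbundle \<Rightarrow> vbundle" where
  "dual V = image_mset uminus V"

text \<open>O(x) tensor O(y) is semistable of slope x+y and rank rk O(x) * rk O(y),
  i.e. isomorphic to O(x+y)^m with m = rk O(x) * rk O(y) / rk O(x+y).\<close>
definition tensor :: "vbundle \<Rightarrow> vbundle \<Rightarrow> vbundle" where
  "tensor V W = (\<Sum>x\<in>#V. \<Sum>y\<in>#W.
      replicate_mset (stab_rank x * stab_rank y div stab_rank (x + y)) (x + y))"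

text \<open>V^{>=0}: the HN filtration step consisting of the HN pieces of slope >= 0\<close>
definition nonneg_part :: "vbundle \<Rightarrow> vbundle" where
  "nonneg_part V = filter_mset (\<lambda>q. 0 \<le> q) V"

text \<open>HN polygon of V as a function on [0, rk V], starting at the origin,
  with segments of slope q and horizontal length (rank of slope-q part),
  arranged in decreasing order of slope.\<close>
definition HN :: "vbundle \<Rightarrow> real \<Rightarrow> real" where
  "HN V t = (\<Sum>q\<in>set_mset V. of_rat q *
      max 0 (min (real (rk (filter_mset (\<lambda>p. p = q) V)))
                 (t - real (rk (filter_mset (\<lambda>p. q < p) V)))))"

definition HN_le :: "vbundle \<Rightarrow> vbundle \<Rightarrow> bool" where
  "HN_le E V \<longleftrightarrow> rk E = rk V \<and> dg E = dg V \<and>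
     (\<forall>t. 0 \<le> t \<and> t \<le> real (rk V) \<longrightarrow> HN E t \<le> HN V t)"

end

theory Submission
  imports Defs
begin


lemma rank_pos: "stab_rank q > 0"
  unfolding stab_rank_def using quotient_of_denom_pos' by simp

lemma deg_eq: "real_of_int (stab_deg q) = real (stab_rank q) * real_of_rat q"
proof -
  obtain a b where ab: "quotient_of q = (a,b)" by (cases "quotient_of q")
  have b: "b > 0" using quotient_of_denom_pos[OF ab] .
  have q: "q = of_int a / of_int b" using quotient_of_div[OF ab] .
  have "real_of_rat q = real_of_int a / real_of_int b" unfolding q by (simp add: of_rat_divide)
  then show ?thesis using b ab unfolding stab_deg_def stab_rank_def by simp
qed

lemma rank_uminus: "stab_rank (- q) = stab_rank q"
  unfolding stab_rank_def rat_uminus_code by (simp add: case_prod_beta)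

lemma denom_dvd:
  assumes "q * of_int n = of_int m" "n > 0"
  shows "snd (quotient_of q) dvd n"
proof -
  obtain a b where ab: "quotient_of q = (a,b)" by (cases "quotient_of q")
  have b: "b > 0" using quotient_of_denom_pos[OF ab] .
  have q: "q = of_int a / of_int b" using quotient_of_div[OF ab] .
  have cp: "coprime a b" using quotient_of_coprime[OF ab] .
  have "of_int a * of_int n = (of_int (m * b) :: rat)" using assms(1) b unfolding q
    by (simp add: field_simps)
  then have "a * n = m * b" by (metis of_int_eq_iff of_int_mult)
  then have "b dvd a * n" by (metis dvd_triv_right)
  then have "b dvd n" using cp by (metis coprime_commute coprime_dvd_mult_right_iff)
  then show ?thesis using ab by simp
qed

lemma rank_dvd: "stab_rank (x + y) dvd stab_rank x * stab_rank y"
proof -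
  obtain a b where ab: "quotient_of x = (a,b)" by (cases "quotient_of x")
  obtain c d where cd: "quotient_of y = (c,d)" by (cases "quotient_of y")
  have b: "b > 0" using quotient_of_denom_pos[OF ab] .
  have d: "d > 0" using quotient_of_denom_pos[OF cd] .
  have "(x + y) * of_int (b*d) = of_int (a*d + c*b)"
    using quotient_of_div[OF ab] quotient_of_div[OF cd] b d by (simp add: field_simps)
  then have "snd (quotient_of (x+y)) dvd b * d" using denom_dvd[of "x+y" "b*d" "a*d+c*b"] b d by simp
  then have "nat (snd (quotient_of (x+y))) dvd nat (b * d)"
    using quotient_of_denom_pos'[of "x+y"] b d by (simp add: nat_dvd_iff less_imp_le)
  then show ?thesis unfolding stab_rank_def using ab cd b d by (simp add: nat_mult_distrib)
qed

lemma of_int_sum_mset: "(of_int (\<Sum>q\<in>#M. f q) :: real) = (\<Sum>q\<in>#M. of_int (f q))"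
  by (induction M) auto

lemma sum_sum_mset: "(\<Sum>q\<in>#(\<Sum>x\<in>#A. G x). h q) = (\<Sum>x\<in>#A. \<Sum>q\<in>#G x. (h q :: 'b::comm_monoid_add))"
  by (induction A) auto

lemma sum_mset_count: "(\<Sum>e\<in>#M. h e) = (\<Sum>q\<in>set_mset M. of_nat (count M q) * (h q :: real))"
proof (induction M)
  case (add x M)
  show ?case
  proof (cases "x \<in># M")
    case True
    have "(\<Sum>y\<in>set_mset (add_mset x M). of_nat (count (add_mset x M) y) * h y) =
            (\<Sum>y\<in>set_mset M. (if y = x then h x else 0) + of_nat (count M y) * h y)"
      using True by (intro sum.cong) (auto simp: algebra_simps)
    also have "\<dots> = h x + (\<Sum>y\<in>set_mset M. of_nat (count M y) * h y)"
      using True by (subst sum.distrib) auto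
    finally show ?thesis using add by simp
  next
    case False
    hence "(\<Sum>y\<in>set_mset (add_mset x M). of_nat (count (add_mset x M) y) * h y) =
              h x + (\<Sum>y\<in>set_mset M. of_nat (count (add_mset x M) y) * h y)"
      by (auto simp: not_in_iff)
    also have "(\<Sum>y\<in>set_mset M. of_nat (count (add_mset x M) y) * h y) =
                 (\<Sum>y\<in>set_mset M. of_nat (count M y) * h y)"
      using False by (intro sum.cong) auto
    finally show ?thesis using add by simp
  qed
qed auto

lemma sum_mset_strict:
  fixes f g :: "'a \<Rightarrow> real"
  assumes "\<And>x. x \<in># M \<Longrightarrow> f x \<le> g x" "a \<in># M" "f a < g a"
  shows "(\<Sum>x\<in>#M. f x) < (\<Sum>x\<in>#M. g x)"
proof -
  obtain M' where M: "M = add_mset a M'" using assms(2) by (metis insert_DiffM)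
  have "(\<Sum>x\<in>#M'. f x) \<le> (\<Sum>x\<in>#M'. g x)" using assms(1) M by (intro sum_mset_mono) auto
  then show ?thesis using M assms(3) by simp
qed

lemma rk_real: "real (rk M) = (\<Sum>q\<in>#M. real (stab_rank q))"
  unfolding rk_def by (induction M) auto

lemma dg_real: "real_of_int (dg M) = (\<Sum>q\<in>#M. real (stab_rank q) * real_of_rat q)"
  unfolding dg_def of_int_sum_mset deg_eq ..



lemma dg_filter: "dg (filter_mset P M) = (\<Sum>q\<in>#M. if P q then stab_deg q else 0)"
  by (induction M) (auto simp: dg_def)

lemma term_eq:
  "real_of_int (int (stab_rank (-x) * stab_rank y div stab_rank (-x + y)) * (if 0 \<le> -x+y then stab_deg (-x+y) else 0))
   = real (stab_rank x) * real (stab_rank y) * max 0 (real_of_rat y - real_of_rat x)"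
proof -
  define s where "s = -x + y"
  define n where "n = stab_rank (-x) * stab_rank y div stab_rank s"
  have dv: "stab_rank s dvd stab_rank x * stab_rank y" using rank_dvd[of "-x" y] rank_uminus[of x] unfolding s_def by simp
  have nr: "n * stab_rank s = stab_rank x * stab_rank y" unfolding n_def rank_uminus using dv by simp
  hence nr': "real n * real (stab_rank s) = real (stab_rank x) * real (stab_rank y)" by (metis of_nat_mult)
  have sr: "real_of_rat s = real_of_rat y - real_of_rat x" unfolding s_def by (simp add: of_rat_add of_rat_minus of_rat_diff)
  show ?thesis
  proof (cases "0 \<le> s")
    case True
    have "real_of_int (int n * stab_deg s) = real n * (real (stab_rank s) * real_of_rat s)"
      using deg_eq[of s] by simp
    also have "\<dots> = real (stab_rank x) * real (stab_rank y) * real_of_rat s" using nr' by (simp add: algebra_simps)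
    finally have calc: "real_of_int (int n * stab_deg s) = real (stab_rank x) * real (stab_rank y) * real_of_rat s" .
    have "0 \<le> real_of_rat s" using True by simp
    then have nn: "0 \<le> real_of_rat y - real_of_rat x" using sr by simp
    show ?thesis unfolding s_def[symmetric] n_def[symmetric] using True calc sr nn by simp
  next
    case False
    then have "real_of_rat s < 0" by simp
    then have "real_of_rat y - real_of_rat x < 0" using sr by simp
    then show ?thesis unfolding s_def[symmetric] using False by simp
  qed
qed

lemma term_eq': "real (stab_rank (- x) * stab_rank y div stab_rank (y - x)) * real_of_int (if x \<le> y then stab_deg (- x + y) else 0)
   = real (stab_rank x) * real (stab_rank y) * max 0 (real_of_rat y - real_of_rat x)"
  using term_eq[of x y] by simp

lemma PKE: "real_of_int (dg (nonneg_part (tensor (dual A) B))) =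
  (\<Sum>x\<in>#A. \<Sum>y\<in>#B. real (stab_rank x) * real (stab_rank y) * max 0 (real_of_rat y - real_of_rat x))"
proof -
  have 1: "dg (nonneg_part (tensor (dual A) B)) = (\<Sum>x\<in>#A. \<Sum>y\<in>#B. int (stab_rank (-x) * stab_rank y div stab_rank (-x + y)) * (if 0 \<le> -x+y then stab_deg (-x+y) else 0))"
    unfolding nonneg_part_def dg_filter tensor_def dual_def sum_sum_mset
    by (simp add: multiset.map_comp comp_def)
  show ?thesis unfolding 1 by (simp only: of_int_sum_mset term_eq)
qed



lemma rk_rep: "rk (replicate_mset c d) = c * stab_rank d" unfolding rk_def by simp
lemma dg_rep: "dg (replicate_mset c d) = int c * stab_deg d" unfolding dg_def by simp
lemma rk_add: "rk (A + B) = rk A + rk B" unfolding rk_def by simp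
lemma rk_empty[simp]: "rk {#} = 0" unfolding rk_def by simp

lemma semistable_rep:
  assumes "semistable D" "D \<noteq> {#}"
  shows "\<exists>d c. D = replicate_mset c d \<and> c > 0"
proof -
  obtain d where d: "d \<in># D" using assms(2) by (meson multiset_nonemptyE)
  have all: "\<forall>x\<in>#D. x = d" using assms(1) d unfolding semistable_def by blast
  have "D = replicate_mset (count D d) d"
    using all by (auto simp: multiset_eq_iff not_in_iff[symmetric])
  moreover have "count D d > 0" using d by simp
  ultimately show ?thesis by blast
qed

lemma slope_rep: assumes "c > 0" shows "slope (replicate_mset c d) = d"
proof -
  have "real_of_rat (slope (replicate_mset c d)) = real_of_int (int c * stab_deg d) / real (c * stab_rank d)"
    unfolding slope_def rk_rep dg_rep by (simp add: of_rat_divide)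
  also have "\<dots> = real_of_rat d" using deg_eq[of d] rank_pos[of d] assms by simp
  finally show ?thesis by simp
qed

lemma filt_rep: "filter_mset P (replicate_mset n x) = (if P x then replicate_mset n x else {#})"
  by (induction n) auto

lemma HN_eq:
  assumes "d \<le> f" "a > 0" "b > 0"
  shows "HN (replicate_mset a d + replicate_mset b f) t =
    (if d = f then real_of_rat d * max 0 (min (real (a * stab_rank d + b * stab_rank f)) t)
     else real_of_rat f * max 0 (min (real (b * stab_rank f)) t)
        + real_of_rat d * max 0 (min (real (a * stab_rank d)) (t - real (b * stab_rank f))))"
proof (cases "d = f")
  case True
  then show ?thesis using assms unfolding HN_def by (simp add: filt_rep rk_rep rk_add algebra_simps)
next
  case False
  then have lt: "d < f" using assms by simp
  have s: "set_mset (replicate_mset a d + replicate_mset b f) = {d, f}" using assms by auto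
  show ?thesis unfolding HN_def s using lt False assms
    by (simp add: filt_rep rk_rep rk_add)
qed



lemma HNV_bound:
  fixes dl ph k t rD rF H :: real
  assumes "dl \<le> ph" "rD > 0" "rF > 0" "0 \<le> t" "t \<le> rD + rF" "k < ph"
    and H: "H = (if dl = ph then dl * max 0 (min (rD+rF) t)
                 else ph * max 0 (min rF t) + dl * max 0 (min rD (t - rF)))"
  shows "H - k*t \<le> rF*(ph-k) + rD*max 0 (dl-k)"
    and "dl < k \<Longrightarrow> t \<noteq> rF \<Longrightarrow> H - k*t < rF*(ph-k) + rD*max 0 (dl-k)"
proof -
  have A: "H - k*t \<le> rF*(ph-k) + rD*max 0 (dl-k) \<and> (dl < k \<longrightarrow> t \<noteq> rF \<longrightarrow> H - k*t < rF*(ph-k) + rD*max 0 (dl-k))"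
  proof (cases "dl = ph")
    case True
    then have H': "H = dl * t" using H assms by simp
    have "(dl - k) * t \<le> (dl - k) * (rD + rF)" using assms True by (intro mult_left_mono) auto
    then show ?thesis using H' True assms by (auto simp: algebra_simps)
  next
    case False
    show ?thesis
    proof (cases "t \<le> rF")
      case True
      then have H': "H = ph * t" using H assms False by simp
      have "(ph - k) * t \<le> (ph - k) * rF" using assms True by (intro mult_left_mono) auto
      moreover have "t < rF \<Longrightarrow> (ph - k) * t < (ph - k) * rF" using assms by (intro mult_strict_left_mono) auto
      moreover have "0 \<le> rD*max 0 (dl-k)" using assms by simp
      ultimately show ?thesis using H' True by (auto simp: algebra_simps)
    next
      case nt: False
      then have H': "H = ph * rF + dl * (t - rF)" using H assms False by simp
      have "(dl - k) * (t - rF) \<le> max 0 (dl - k) * rD"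
      proof (cases "dl \<le> k")
        case True
        then have "(dl - k) * (t - rF) \<le> 0" using nt by (intro mult_nonpos_nonneg) auto
        moreover have "0 \<le> max 0 (dl - k) * rD" using assms by simp
        ultimately show ?thesis by linarith
      next
        case False
        then show ?thesis using assms nt by (intro mult_mono) auto
      qed
      moreover have "dl < k \<Longrightarrow> (dl - k) * (t - rF) < 0" using nt by (intro mult_neg_pos) auto
      ultimately show ?thesis using H' by (auto simp: algebra_simps)
    qed
  qed
  then show "H - k*t \<le> rF*(ph-k) + rD*max 0 (dl-k)" by blast
  show "dl < k \<Longrightarrow> t \<noteq> rF \<Longrightarrow> H - k*t < rF*(ph-k) + rD*max 0 (dl-k)" using A by blast
qed

lemma sum_mset_diff_distrib: "(\<Sum>x\<in>#M. (f x - g x :: real)) = (\<Sum>x\<in>#M. f x) - (\<Sum>x\<in>#M. g x)"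
  by (induction M) auto

lemma rk_filter: "real (rk (filter_mset P M)) = (\<Sum>e\<in>#M. if P e then real (stab_rank e) else 0)"
  by (induction M) (auto simp: rk_def)

lemma HNE:
  fixes E :: vbundle and kp :: rat
  defines "T \<equiv> rk (filter_mset (\<lambda>p. kp < p) E)"
  shows "HN E (real T) - real_of_rat kp * real T = (\<Sum>e\<in>#E. real (stab_rank e) * max 0 (real_of_rat e - real_of_rat kp))"
proof -
  let ?r = "\<lambda>e. real (stab_rank e)"
  have Tr: "real T = (\<Sum>e\<in>#E. if kp < e then ?r e else 0)" unfolding T_def rk_filter ..
  have trm: "real_of_rat q * max 0 (min (real (rk (filter_mset (\<lambda>p. p = q) E))) (real T - real (rk (filter_mset (\<lambda>p. q < p) E))))
      = (if kp < q then real_of_rat q * real (count E q) * ?r q else 0)" for q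
  proof -
    have cq: "real (rk (filter_mset (\<lambda>p. p = q) E)) = real (count E q) * ?r q"
      unfolding filter_eq_replicate_mset rk_rep by simp
    show ?thesis
    proof (cases "kp < q")
      case True
      have "(\<Sum>e\<in>#E. (if q < e then ?r e else 0) + (if e = q then ?r e else 0)) \<le> (\<Sum>e\<in>#E. if kp < e then ?r e else 0)"
        using True by (intro sum_mset_mono) auto
      then have "real (rk (filter_mset (\<lambda>p. q < p) E)) + real (rk (filter_mset (\<lambda>p. p = q) E)) \<le> real T"
        unfolding Tr rk_filter sum_mset.distrib by simp
      then show ?thesis using True cq by simp
    next
      case False
      have "(\<Sum>e\<in>#E. if kp < e then ?r e else 0) \<le> (\<Sum>e\<in>#E. if q < e then ?r e else 0)"
        using False by (intro sum_mset_mono) auto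
      then have "real T \<le> real (rk (filter_mset (\<lambda>p. q < p) E))" unfolding Tr rk_filter by simp
      then show ?thesis using False by simp
    qed
  qed
  have "HN E (real T) = (\<Sum>q\<in>set_mset E. real (count E q) * (if kp < q then real_of_rat q * ?r q else 0))"
    unfolding HN_def trm by (intro sum.cong) auto
  also have "\<dots> = (\<Sum>e\<in>#E. if kp < e then real_of_rat e * ?r e else 0)"
    by (rule sum_mset_count[symmetric])
  finally have "HN E (real T) - real_of_rat kp * real T =
     (\<Sum>e\<in>#E. if kp < e then real_of_rat e * ?r e else 0) - (\<Sum>e\<in>#E. if kp < e then real_of_rat kp * ?r e else 0)"
    unfolding Tr by (simp add: sum_mset_distrib_left if_distrib)
  also have "\<dots> = (\<Sum>e\<in>#E. (if kp < e then real_of_rat e * ?r e else 0) - (if kp < e then real_of_rat kp * ?r e else 0))"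
    by (rule sum_mset_diff_distrib[symmetric])
  also have "\<dots> = (\<Sum>e\<in>#E. ?r e * max 0 (real_of_rat e - real_of_rat kp))"
    by (intro arg_cong[where f=sum_mset] image_mset_cong) (auto simp: algebra_simps of_rat_less of_rat_less_eq max_def)
  finally show ?thesis .
qed



lemma sum_rk: "(\<Sum>e\<in>#M. real (stab_rank e)) = real (rk M)" using rk_real by simp
lemma sum_dg: "(\<Sum>e\<in>#M. real (stab_rank e) * real_of_rat e) = real_of_int (dg M)" using dg_real by simp

lemma rk_pos_ne: "M \<noteq> {#} \<Longrightarrow> rk M > 0"
proof -
  assume "M \<noteq> {#}"
  then obtain x where "x \<in># M" by (meson multiset_nonemptyE)
  then obtain M' where "M = add_mset x M'" by (metis insert_DiffM)
  then show ?thesis using rank_pos[of x] unfolding rk_def by simp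
qed

theorem theorem5p1:
  fixes D F E K :: vbundle
  assumes "semistable D" and "D \<noteq> {#}"
    and "semistable F" and "F \<noteq> {#}"
    and "slope D \<le> slope F"
    and "HN_le E (D + F)"
    and "max_slope E < slope F"
    and "rk K = rk D" and "dg K = dg D"
    and "max_slope K \<le> max_slope E"
    and "\<not> semistable K"
  shows "dg (nonneg_part (tensor (dual K) E))
           < dg (nonneg_part (tensor (dual K) K)) + dg (nonneg_part (tensor (dual E) F))"
proof -
  let ?r = "\<lambda>e. real (stab_rank e)"
  let ?v = "\<lambda>e. real_of_rat e"
  obtain d a where Dd: "D = replicate_mset a d" and a: "a > 0" using semistable_rep assms(1,2) by blast
  obtain f b where Ff: "F = replicate_mset b f" and b: "b > 0" using semistable_rep assms(3,4) by blast
  have sD: "slope D = d" using Dd a slope_rep by simp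
  have sF: "slope F = f" using Ff b slope_rep by simp
  have df: "d \<le> f" using assms(5) sD sF by simp
  define rD where "rD = real (rk D)"
  define rF where "rF = real (rk F)"
  define dl where "dl = ?v d"
  define ph where "ph = ?v f"
  have rD: "rD = real (a * stab_rank d)" unfolding rD_def Dd rk_rep ..
  have rF: "rF = real (b * stab_rank f)" unfolding rF_def Ff rk_rep ..
  have rDp: "rD > 0" using rD a rank_pos[of d] by simp
  have rFp: "rF > 0" using rF b rank_pos[of f] by simp
  have dgD: "real_of_int (dg D) = rD * dl" unfolding Dd dg_rep rD dl_def using deg_eq[of d] by simp
  have dgF: "real_of_int (dg F) = rF * ph" unfolding Ff dg_rep rF ph_def using deg_eq[of f] by simp
  have dlph: "dl \<le> ph" unfolding dl_def ph_def using df by (simp add: of_rat_less_eq)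
  have dleq: "dl = ph \<longleftrightarrow> d = f" unfolding dl_def ph_def by simp
  have HNle: "rk E = rk (D+F)" "dg E = dg (D+F)" "\<And>t. 0 \<le> t \<Longrightarrow> t \<le> real (rk (D+F)) \<Longrightarrow> HN E t \<le> HN (D+F) t"
    using assms(6) unfolding HN_le_def by auto
  have rkE: "real (rk E) = rD + rF" using HNle(1) unfolding rD_def rF_def rk_add by simp
  have dgE: "real_of_int (dg E) = rD * dl + rF * ph" using HNle(2) dgD dgF unfolding dg_def by simp
  have Ene: "E \<noteq> {#}" using rkE rDp rFp by (auto simp: rk_def)
  have Emax: "\<And>e. e \<in># E \<Longrightarrow> e < f" using assms(7) sF Ene unfolding max_slope_def
    by (meson Max_ge finite_set_mset le_less_trans)
  have "rk K > 0" using assms(8) rDp rD_def by simp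
  then have Kne: "K \<noteq> {#}" by auto
  define km where "km = Max (set_mset K)"
  have kmK: "km \<in># K" unfolding km_def using Kne by simp
  have kmax: "\<And>k. k \<in># K \<Longrightarrow> k \<le> km" unfolding km_def by simp
  have kmf: "km < f" using assms(10) assms(7) sF unfolding max_slope_def km_def by simp
  have rkK: "real (rk K) = rD" using assms(8) rD_def by simp
  have dgK: "real_of_int (dg K) = rD * dl" using assms(9) dgD by simp
  define gE where "gE = (\<lambda>k. \<Sum>e\<in>#E. ?r e * max 0 (?v e - ?v k))"
  define gV where "gV = (\<lambda>k. rF * (ph - ?v k) + rD * max 0 (dl - ?v k))"
  have claim: "gE k \<le> gV k \<and> (dl < ?v k \<longrightarrow> gE k < gV k)" if kf: "k < f" for k
  proof -
    define T where "T = rk (filter_mset (\<lambda>p. k < p) E)"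
    have Tr: "real T = (\<Sum>e\<in>#E. if k < e then ?r e else 0)" unfolding T_def rk_filter ..
    have "(\<Sum>e\<in>#E. if k < e then ?r e else 0) \<le> (\<Sum>e\<in>#E. ?r e)" by (intro sum_mset_mono) auto
    then have Tle: "real T \<le> rD + rF" using Tr rkE sum_rk by simp
    have T0: "0 \<le> real T" by simp
    have gEeq: "gE k = HN E (real T) - ?v k * real T" unfolding gE_def T_def using HNE by simp
    have "HN E (real T) \<le> HN (D+F) (real T)" using HNle(3) T0 Tle rD_def rF_def rk_add by simp
    then have gE1: "gE k \<le> HN (D+F) (real T) - ?v k * real T" using gEeq by simp
    have Hf: "HN (D+F) (real T) = (if dl = ph then dl * max 0 (min (rD+rF) (real T))
                 else ph * max 0 (min rF (real T)) + dl * max 0 (min rD (real T - rF)))"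
      unfolding Dd Ff HN_eq[OF df a b] dleq using rD rF dl_def ph_def by (simp add: add.commute)
    have kph: "?v k < ph" unfolding ph_def using kf by (simp add: of_rat_less)
    note B = HNV_bound[OF dlph rDp rFp T0 Tle kph Hf]
    have le: "gE k \<le> gV k" using gE1 B(1) unfolding gV_def by simp
    moreover have "gE k < gV k" if dk: "dl < ?v k"
    proof (cases "real T = rF")
      case False
      then show ?thesis using gE1 B(2)[OF dk] unfolding gV_def by simp
    next
      case True
      have "\<exists>e. e \<in># E \<and> k < e"
      proof (rule ccontr)
        assume "\<not> ?thesis"
        then have "(\<Sum>e\<in>#E. if k < e then ?r e else 0) = (\<Sum>e\<in>#E. 0)" by (intro arg_cong[where f=sum_mset] image_mset_cong) auto
        then show False using Tr True rFp by simp
      qed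
      then obtain e0 where e0: "e0 \<in># E" "k < e0" by blast
      have "gE k < (\<Sum>e\<in>#E. if k < e then ?r e * (ph - ?v k) else 0)"
        unfolding gE_def
      proof (rule sum_mset_strict[OF _ e0(1)])
        fix e assume e: "e \<in># E"
        have "?v e < ph" using Emax[OF e] unfolding ph_def by (simp add: of_rat_less)
        then show "?r e * max 0 (?v e - ?v k) \<le> (if k < e then ?r e * (ph - ?v k) else 0)"
          using rank_pos[of e] by (auto simp: of_rat_less of_rat_less_eq max_def intro: mult_left_mono)
      next
        have "?v e0 < ph" using Emax[OF e0(1)] unfolding ph_def by (simp add: of_rat_less)
        moreover have "?v k < ?v e0" using e0(2) by (simp add: of_rat_less)
        ultimately show "?r e0 * max 0 (?v e0 - ?v k) < (if k < e0 then ?r e0 * (ph - ?v k) else 0)"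
          using rank_pos[of e0] e0(2) by (auto simp: max_def intro: mult_strict_left_mono)
      qed
      also have "\<dots> = (ph - ?v k) * real T" unfolding Tr sum_mset_distrib_left
        by (intro arg_cong[where f=sum_mset] image_mset_cong) auto
      also have "\<dots> \<le> gV k" unfolding gV_def using True rDp by simp
      finally show ?thesis .
    qed
    ultimately show ?thesis by blast
  qed
  have sK: "(\<Sum>k\<in>#K. ?r k * (c - ?v k)) = rD * c - rD * dl" for c
  proof -
    have "(\<Sum>k\<in>#K. ?r k * (c - ?v k)) = (\<Sum>k\<in>#K. c * ?r k - ?r k * ?v k)"
      by (intro arg_cong[where f=sum_mset] image_mset_cong) (auto simp: algebra_simps)
    also have "\<dots> = c * (\<Sum>k\<in>#K. ?r k) - (\<Sum>k\<in>#K. ?r k * ?v k)"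
      unfolding sum_mset_diff_distrib sum_mset_distrib_left ..
    also have "\<dots> = rD * c - rD * dl" unfolding sum_rk sum_dg rkK dgK by simp
    finally show ?thesis .
  qed
  obtain x y where xy: "x \<in># K" "y \<in># K" "x \<noteq> y" using assms(11) unfolding semistable_def by blast
  define m where "m = min x y"
  have mK: "m \<in># K" unfolding m_def using xy by (simp add: min_def)
  have mkm: "m < km" unfolding m_def using xy kmax[OF xy(1)] kmax[OF xy(2)] by (auto simp: min_def)
  have "(\<Sum>k\<in>#K. (0::real)) < (\<Sum>k\<in>#K. ?r k * (?v km - ?v k))"
  proof (rule sum_mset_strict[OF _ mK])
    fix k assume "k \<in># K"
    then show "0 \<le> ?r k * (?v km - ?v k)" using kmax by (simp add: of_rat_less_eq)
  next
    show "0 < ?r m * (?v km - ?v m)" using mkm rank_pos[of m] by (simp add: of_rat_less)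
  qed
  then have "0 < rD * ?v km - rD * dl" using sK by simp
  then have dlkm: "dl < ?v km" using rDp by (simp add: algebra_simps)
  have L: "real_of_int (dg (nonneg_part (tensor (dual K) E))) = (\<Sum>k\<in>#K. ?r k * gE k)"
    unfolding PKE gE_def sum_mset_distrib_left by (simp add: mult.assoc)
  have Lt: "(\<Sum>k\<in>#K. ?r k * gE k) < (\<Sum>k\<in>#K. ?r k * gV k)"
  proof (rule sum_mset_strict[OF _ kmK])
    fix k assume "k \<in># K"
    then have "k < f" using kmax kmf by (meson le_less_trans)
    then show "?r k * gE k \<le> ?r k * gV k" using claim by (intro mult_left_mono) auto
  next
    show "?r km * gE km < ?r km * gV km" using claim[OF kmf] dlkm rank_pos[of km]
      by (intro mult_strict_left_mono) auto
  qed
  have gVs: "(\<Sum>k\<in>#K. ?r k * gV k) = rF * (rD * ph - rD * dl) + (\<Sum>k\<in>#K. ?r k * (rD * max 0 (dl - ?v k)))"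
  proof -
    have "(\<Sum>k\<in>#K. ?r k * gV k) = (\<Sum>k\<in>#K. rF * (?r k * (ph - ?v k)) + ?r k * (rD * max 0 (dl - ?v k)))"
      unfolding gV_def by (intro arg_cong[where f=sum_mset] image_mset_cong) (auto simp: algebra_simps)
    also have "\<dots> = rF * (\<Sum>k\<in>#K. ?r k * (ph - ?v k)) + (\<Sum>k\<in>#K. ?r k * (rD * max 0 (dl - ?v k)))"
      unfolding sum_mset.distrib sum_mset_distrib_left ..
    finally show ?thesis unfolding sK .
  qed
  have KK: "(\<Sum>k\<in>#K. ?r k * (rD * max 0 (dl - ?v k))) \<le> real_of_int (dg (nonneg_part (tensor (dual K) K)))"
    unfolding PKE
  proof (rule sum_mset_mono)
    fix k assume "k \<in># K"
    have s1: "(\<Sum>k2\<in>#K. ?r k2 * (?v k2 - ?v k)) \<le> (\<Sum>k2\<in>#K. ?r k2 * max 0 (?v k2 - ?v k))"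
      by (intro sum_mset_mono mult_left_mono) auto
    have s2: "0 \<le> (\<Sum>k2\<in>#K. ?r k2 * max 0 (?v k2 - ?v k))"
      using sum_mset_mono[of K "\<lambda>_. (0::real)" "\<lambda>k2. ?r k2 * max 0 (?v k2 - ?v k)"] by simp
    have "(\<Sum>k2\<in>#K. ?r k2 * (?v k2 - ?v k)) = (\<Sum>k2\<in>#K. ?r k2 * ?v k2 - ?v k * ?r k2)"
      by (intro arg_cong[where f=sum_mset] image_mset_cong) (auto simp: algebra_simps)
    also have "\<dots> = (\<Sum>k2\<in>#K. ?r k2 * ?v k2) - ?v k * (\<Sum>k2\<in>#K. ?r k2)"
      unfolding sum_mset_diff_distrib sum_mset_distrib_left ..
    also have "\<dots> = rD * dl - rD * ?v k" unfolding sum_dg dgK sum_rk rkK by simp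
    finally have "(\<Sum>k2\<in>#K. ?r k2 * (?v k2 - ?v k)) = rD * dl - rD * ?v k" .
    then have "rD * max 0 (dl - ?v k) \<le> (\<Sum>k2\<in>#K. ?r k2 * max 0 (?v k2 - ?v k))"
      using s1 s2 rDp by (auto simp: max_def algebra_simps)
    then show "?r k * (rD * max 0 (dl - ?v k)) \<le> (\<Sum>y\<in>#K. ?r k * ?r y * max 0 (?v y - ?v k))"
      unfolding mult.assoc sum_mset_distrib_left[symmetric] by (intro mult_left_mono) auto
  qed
  have EF: "real_of_int (dg (nonneg_part (tensor (dual E) F))) = rF * (rD * ph - rD * dl)"
  proof -
    have "real_of_int (dg (nonneg_part (tensor (dual E) F))) = (\<Sum>e\<in>#E. real b * (?r e * ?r f * max 0 (ph - ?v e)))"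
      unfolding PKE Ff ph_def by simp
    also have "\<dots> = (\<Sum>e\<in>#E. rF * ph * ?r e - rF * (?r e * ?v e))"
    proof (intro arg_cong[where f=sum_mset] image_mset_cong)
      fix e assume "e \<in># E"
      then have "?v e < ph" using Emax unfolding ph_def by (simp add: of_rat_less)
      then show "real b * (?r e * ?r f * max 0 (ph - ?v e)) = rF * ph * ?r e - rF * (?r e * ?v e)"
        unfolding rF by (simp add: algebra_simps max_def)
    qed
    also have "\<dots> = rF * ph * (rD + rF) - rF * (rD * dl + rF * ph)"
      unfolding sum_mset_diff_distrib sum_mset_distrib_left[symmetric] sum_rk sum_dg rkE dgE ..
    finally show ?thesis by (simp add: algebra_simps)
  qed
  have "real_of_int (dg (nonneg_part (tensor (dual K) E)))
     < real_of_int (dg (nonneg_part (tensor (dual K) K))) + real_of_int (dg (nonneg_part (tensor (dual E) F)))"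
    using L Lt gVs KK EF by linarith
  then show ?thesis by linarith
qed

end
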